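(* For all real $a,b$, $$|\Phi(a)-\Phi(b)|\ge|a-b|\sqrt{\varphi(a)\varphi(b)},$$ where $\varphi(x)=\frac{1}{\sqrt{2\pi}}e^{-x^2/2}$ and $\Phi(x)=\int_{-\infty}^x\varphi(t)\,dt$. *)

theory Defs
  imports "HOL-Analysis.Analysis"
begin

definition std_phi :: "real \<Rightarrow> real" where
  "std_phi x = exp (- (x\<^sup>2) / 2) / sqrt (2 * pi)"

definition std_Phi :: "real \<Rightarrow> real" where
  "std_Phi x = (LBINT t:{..x}. std_phi t)"

end

theory Submission
  imports Defs "HOL-Probability.Distributions"
begin

lemma std_phi_pos: "std_phi x > 0"
  unfolding std_phi_def by simp

lemma std_phi_eq: "std_phi = std_normal_density"
  by (rule ext) (simp add: std_phi_def std_normal_density_def)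

lemma std_phi_integrable: "integrable lborel std_phi"
  using integrable_std_normal_moment[of 0] by (simp add: std_phi_eq)

lemma std_phi_set_integrable: "S \<in> sets lborel \<Longrightarrow> set_integrable lborel S std_phi"
  unfolding set_integrable_def
  by (rule integrable_mult_indicator) (auto simp: std_phi_integrable)

lemma std_phi_cont: "continuous_on S std_phi"
  unfolding std_phi_def by (intro continuous_intros) auto

lemma std_phi_mult: "std_phi x * std_phi y = exp (-(x\<^sup>2 + y\<^sup>2) / 2) / (2*pi)"
proof -
  have "sqrt (2*pi) * sqrt (2*pi) = 2*pi" by simp
  then show ?thesis unfolding std_phi_def
    by (simp add: field_simps exp_add[symmetric] add_divide_distrib)
qed

lemma Phi_diff:
  assumes "a \<le> b"
  shows "std_Phi b - std_Phi a = integral {a..b} std_phi"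
proof -
  have "{..b} = {..a} \<union> {a<..b}" using assms by auto
  then have "std_Phi b = (LBINT t:{..a}. std_phi t) + (LBINT t:{a<..b}. std_phi t)"
    unfolding std_Phi_def
    by (simp only:) (rule set_integral_Un; auto intro: std_phi_set_integrable)
  moreover have "(LBINT t:{a<..b}. std_phi t) = (LBINT t=a..b. std_phi t)"
    using assms by (simp add: interval_integral_Ioc)
  moreover have "(LBINT t=a..b. std_phi t) = integral {a..b} std_phi"
    using assms by (intro interval_integral_eq_integral std_phi_set_integrable) auto
  ultimately show ?thesis unfolding std_Phi_def by simp
qed

lemma reflect_eq:
  fixes a b :: real
  assumes "a \<le> b"
  shows "integral {a..b} (\<lambda>t. std_phi (a + b - t)) = integral {a..b} std_phi"
proof -
  have int: "(std_phi has_integral integral {a..b} std_phi) (cbox a b)"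
    unfolding cbox_interval by (intro integrable_integral integrable_continuous_interval std_phi_cont)
  have img: "(\<lambda>x. (1 / (-1::real)) *\<^sub>R x + - ((1 / (-1)) *\<^sub>R (a+b))) ` cbox a b = {a..b}"
  proof -
    have "(\<lambda>x. (1 / (-1::real)) *\<^sub>R x + - ((1 / (-1)) *\<^sub>R (a+b))) = (\<lambda>x. a + b - x)"
      by (rule ext) simp
    moreover have "(\<lambda>x. a + b - x) ` {a..b} = {a..b}"
    proof
      show "(\<lambda>x. a + b - x) ` {a..b} \<subseteq> {a..b}" by auto
      show "{a..b} \<subseteq> (\<lambda>x. a + b - x) ` {a..b}"
      proof
        fix y assume "y \<in> {a..b}"
        then show "y \<in> (\<lambda>x. a + b - x) ` {a..b}"
          by (intro image_eqI[of _ _ "a + b - y"]) auto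
      qed
    qed
    ultimately show ?thesis by (simp only: cbox_interval)
  qed
  from has_integral_affinity[OF int, of "-1" "a+b", simplified img]
  have "((\<lambda>x. std_phi ((-1) *\<^sub>R x + (a+b))) has_integral
          (1 / \<bar>-1\<bar> ^ DIM(real)) *\<^sub>R integral {a..b} std_phi) {a..b}"
    by simp
  then have "((\<lambda>t. std_phi (a + b - t)) has_integral integral {a..b} std_phi) {a..b}"
    by (simp add: algebra_simps)
  then show ?thesis by (rule integral_unique)
qed

lemma pointwise:
  fixes a b t :: real
  assumes "a \<le> t" "t \<le> b"
  shows "2 * sqrt (std_phi a * std_phi b) \<le> std_phi t + std_phi (a + b - t)"
proof -
  let ?s = "a + b - t"
  have q: "t\<^sup>2 + ?s\<^sup>2 \<le> a\<^sup>2 + b\<^sup>2"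
  proof -
    have "a\<^sup>2 + b\<^sup>2 - (t\<^sup>2 + ?s\<^sup>2) = 2 * ((t - a) * (b - t))"
      by (simp add: power2_eq_square algebra_simps)
    moreover have "(t - a) * (b - t) \<ge> 0" using assms by simp
    ultimately show ?thesis by linarith
  qed
  have "std_phi a * std_phi b \<le> std_phi t * std_phi ?s"
    unfolding std_phi_mult using q by (intro divide_right_mono) auto
  then have "sqrt (std_phi a * std_phi b) \<le> sqrt (std_phi t * std_phi ?s)"
    by (rule real_sqrt_le_mono)
  also have "2 * sqrt (std_phi t * std_phi ?s) \<le> std_phi t + std_phi ?s"
    using arith_geo_mean_sqrt[of "std_phi t" "std_phi ?s"] std_phi_pos[of t] std_phi_pos[of ?s]
    by simp
  finally show ?thesis by linarith
qed

lemma main_le: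
  fixes a b :: real
  assumes "a \<le> b"
  shows "(b - a) * sqrt (std_phi a * std_phi b) \<le> std_Phi b - std_Phi a"
proof -
  let ?c = "sqrt (std_phi a * std_phi b)"
  have i1: "std_phi integrable_on {a..b}"
    by (intro integrable_continuous_interval std_phi_cont)
  have i2: "(\<lambda>t. std_phi (a + b - t)) integrable_on {a..b}"
    by (intro integrable_continuous_interval continuous_on_compose2[OF std_phi_cont]
        continuous_intros) auto
  have "integral {a..b} (\<lambda>t. 2 * ?c) \<le> integral {a..b} (\<lambda>t. std_phi t + std_phi (a + b - t))"
    by (intro integral_le integrable_add i1 i2 pointwise) auto
  also have "\<dots> = 2 * integral {a..b} std_phi"
    using integral_add[OF i1 i2] reflect_eq[OF assms] by simp
  finally have "(b - a) * (2 * ?c) \<le> 2 * integral {a..b} std_phi"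
    using assms by simp
  then show ?thesis using Phi_diff[OF assms] by simp
qed

theorem mainTheorem13:
  fixes a b :: real
  shows "\<bar>std_Phi a - std_Phi b\<bar> \<ge> \<bar>a - b\<bar> * sqrt (std_phi a * std_phi b)"
proof (cases "a \<le> b")
  case True
  from main_le[OF True] have "(b - a) * sqrt (std_phi a * std_phi b) \<le> std_Phi b - std_Phi a" .
  moreover have "0 \<le> (b - a) * sqrt (std_phi a * std_phi b)"
    using True std_phi_pos[of a] std_phi_pos[of b] by simp
  ultimately show ?thesis using True by (simp add: abs_if)
next
  case False
  then have ba: "b \<le> a" by simp
  from main_le[OF ba] have "(a - b) * sqrt (std_phi b * std_phi a) \<le> std_Phi a - std_Phi b" .
  moreover have "0 \<le> (a - b) * sqrt (std_phi b * std_phi a)"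
    using ba std_phi_pos[of a] std_phi_pos[of b] by simp
  ultimately show ?thesis using ba by (simp add: abs_if mult.commute)
qed

end
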